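(* Let $\mathcal{D}$ be an even domain and $a,b>0$, $c\ge\max\{a,b\}$, and let $c_b,c_b'\in[0,\infty]$ with $c_b\le c_b'$. Then \[\mathsf{HF}_{\mathcal{D}\setminus\partial_V\mathcal{D},a,b,c}^{-1,0}\preceq \mathsf{HF}_{\mathcal{D},a,b,c}^{0,1;c_b}\preceq \mathsf{HF}_{\mathcal{D},a,b,c}^{0,1;c_b'}\preceq \mathsf{HF}_{\mathcal{D}\setminus\partial_V\mathcal{D},a,b,c}^{0,1},\] where $\preceq$ denotes stochastic domination with respect to the pointwise order on height functions.
   Context: Faces of $\mathbb{Z}^2$ are centered at integer points; the face $(i,j)$ is even if $i+j$ is even, odd otherwise. A domain is a finite subgraph $\mathcal{D}$ of $\mathbb{Z}^2$ consisting of a simple cycle $\partial\mathcal{D}$ together with everything it encloses; its faces are the enclosed faces. $\partial_{\mathrm{ext}}\mathcal{D}$ is the set of faces not in $\mathcal{D}$ sharing an edge with a face of $\mathcal{D}$; $\mathcal{D}$ is even if all faces of $\partial_{\mathrm{ext}}\mathcal{D}$ are even. $\partial_V\mathcal{D}$ is the set of vertices of $\mathcal{D}$ belonging to exactly one face of $\mathcal{D}$. A height function is $h\colon F(\mathbb{Z}^2)\to\mathbb{Z}$ with $|h(u)-h(v)|=1$ across edges and $h(u)$ of the parity of $u$. Around a vertex the four faces form two diagonal pairs (south-west/north-east and north-west/south-east); the vertex is of type $c$ if both pairs have equal heights, of type $a$ if only the south-west/north-east pair does, of type $b$ if only the north-west/south-east pair does. For $n\in\mathbb{Z}$ the boundary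 condition "$n,n+1$" is the function equal to $n$ on faces of the parity of $n$ and $n+1$ on the others. For $c_b\in(0,\infty)$, $\mathsf{HF}_{\mathcal{D},a,b,c}^{0,1;c_b}$ is the probability measure on height functions equal to the $0,1$ boundary condition off the faces of $\mathcal{D}$, with probability proportional to $a^{N_a'}b^{N_b'}c^{N_c'}c_b^{N_{\partial}}$, where $N_x'$ counts vertices of $\mathcal{D}\setminus\partial_V\mathcal{D}$ of type $x$ and $N_\partial$ counts vertices of $\partial_V\mathcal{D}$ of type $c$; for $c_b\in\{0,\infty\}$ it is the weak limit as $c_b\to0$ or $c_b\to\infty$. For $t$ equal to the $-1,0$ or the $0,1$ boundary condition, $\mathsf{HF}_{\mathcal{D}\setminus\partial_V\mathcal{D},a,b,c}^{t}$ denotes the height-function measure on the graph $\mathcal{D}\setminus\partial_V\mathcal{D}$ obtained from $\mathcal{D}$ by removing the vertices of $\partial_V\mathcal{D}$ and their incident edges: it is supported on height functions equal to $t$ on all faces that are not faces of $\mathcal{D}$ or that contain a vertex of $\partial_V\mathcal{D}$, with probability proportional to $a^{N_a'}b^{N_b'}c^{N_c'}$. *)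

theory Defs
  imports Complex_Main "HOL-Library.Extended_Real"
begin

text \<open>Faces of Z^2 are indexed by their centres (i,j) :: int \<times> int.
  A vertex (x,y) :: int \<times> int denotes the lattice corner at the point (x+1/2, y+1/2);
  its four surrounding faces are SW=(x,y), SE=(x+1,y), NW=(x,y+1), NE=(x+1,y+1).\<close>

type_synonym face = "int \<times> int"
type_synonym vertex = "int \<times> int"
type_synonym hfun = "face \<Rightarrow> int"

definition adj_face :: "face \<Rightarrow> face \<Rightarrow> bool" where
  "adj_face u w \<longleftrightarrow> \<bar>fst u - fst w\<bar> + \<bar>snd u - snd w\<bar> = 1"

definition adj_vertex :: "vertex \<Rightarrow> vertex \<Rightarrow> bool" where
  "adj_vertex v w \<longleftrightarrow> \<bar>fst v - fst w\<bar> + \<bar>snd v - snd w\<bar> = 1"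

definition even_face :: "face \<Rightarrow> bool" where
  "even_face u \<longleftrightarrow> even (fst u + snd u)"

definition faces_at :: "vertex \<Rightarrow> face set" where
  "faces_at v = {(fst v, snd v), (fst v + 1, snd v), (fst v, snd v + 1), (fst v + 1, snd v + 1)}"

definition simple_cycle :: "vertex list \<Rightarrow> bool" where
  "simple_cycle cs \<longleftrightarrow> length cs \<ge> 3 \<and> distinct cs \<and>
     (\<forall>k < length cs. adj_vertex (cs ! k) (cs ! ((k + 1) mod length cs)))"

text \<open>A face is enclosed by the cycle iff the vertical ray going upwards from its
  centre crosses an odd number of (horizontal) edges of the cycle.\<close>
definition crossings :: "vertex list \<Rightarrow> face \<Rightarrow> nat" where
  "crossings cs u = card {k. k < length cs \<and>
     (\<exists>y \<ge> snd u. {cs ! k, cs ! ((k + 1) mod length cs)} = {(fst u - 1, y), (fst u, y)})}"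

definition enclosed_faces :: "vertex list \<Rightarrow> face set" where
  "enclosed_faces cs = {u. odd (crossings cs u)}"

definition is_domain :: "face set \<Rightarrow> bool" where
  "is_domain D \<longleftrightarrow> (\<exists>cs. simple_cycle cs \<and> D = enclosed_faces cs)"

definition dom_vertices :: "face set \<Rightarrow> vertex set" where
  "dom_vertices D = {v. faces_at v \<inter> D \<noteq> {}}"

definition bdryV :: "face set \<Rightarrow> vertex set" where
  "bdryV D = {v. card (faces_at v \<inter> D) = 1}"

definition ext_bdry :: "face set \<Rightarrow> face set" where
  "ext_bdry D = {u. u \<notin> D \<and> (\<exists>w\<in>D. adj_face u w)}"

definition even_domain :: "face set \<Rightarrow> bool" where
  "even_domain D \<longleftrightarrow> is_domain D \<and> (\<forall>u\<in>ext_bdry D. even_face u)"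

definition height_function :: "hfun \<Rightarrow> bool" where
  "height_function h \<longleftrightarrow> (\<forall>u w. adj_face u w \<longrightarrow> \<bar>h u - h w\<bar> = 1) \<and>
     (\<forall>u. even (h u) \<longleftrightarrow> even_face u)"

definition SW :: "vertex \<Rightarrow> face" where "SW v = (fst v, snd v)"
definition SE :: "vertex \<Rightarrow> face" where "SE v = (fst v + 1, snd v)"
definition NW :: "vertex \<Rightarrow> face" where "NW v = (fst v, snd v + 1)"
definition NE :: "vertex \<Rightarrow> face" where "NE v = (fst v + 1, snd v + 1)"

definition type_c :: "hfun \<Rightarrow> vertex \<Rightarrow> bool" where
  "type_c h v \<longleftrightarrow> h (SW v) = h (NE v) \<and> h (NW v) = h (SE v)"
definition type_a :: "hfun \<Rightarrow> vertex \<Rightarrow> bool" where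
  "type_a h v \<longleftrightarrow> h (SW v) = h (NE v) \<and> h (NW v) \<noteq> h (SE v)"
definition type_b :: "hfun \<Rightarrow> vertex \<Rightarrow> bool" where
  "type_b h v \<longleftrightarrow> h (SW v) \<noteq> h (NE v) \<and> h (NW v) = h (SE v)"

definition vweight :: "real \<Rightarrow> real \<Rightarrow> real \<Rightarrow> hfun \<Rightarrow> vertex \<Rightarrow> real" where
  "vweight a b c h v = (if type_c h v then c else if type_a h v then a
                        else if type_b h v then b else 1)"

definition bc :: "int \<Rightarrow> hfun" where
  "bc n u = (if even_face u = even n then n else n + 1)"

text \<open>The measure HF_{D,a,b,c}^{0,1;cb} for finite cb > 0, as a function on events.\<close>
definition Omega_D :: "face set \<Rightarrow> hfun set" where
  "Omega_D D = {h. height_function h \<and> (\<forall>u. u \<notin> D \<longrightarrow> h u = bc 0 u)}"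

definition weight_D :: "real \<Rightarrow> real \<Rightarrow> real \<Rightarrow> real \<Rightarrow> face set \<Rightarrow> hfun \<Rightarrow> real" where
  "weight_D a b c cb D h =
     (\<Prod>v \<in> dom_vertices D - bdryV D. vweight a b c h v) *
     (\<Prod>v \<in> bdryV D. if type_c h v then cb else 1)"

definition prob_D :: "real \<Rightarrow> real \<Rightarrow> real \<Rightarrow> real \<Rightarrow> face set \<Rightarrow> hfun set \<Rightarrow> real" where
  "prob_D a b c cb D A =
     (\<Sum>h \<in> Omega_D D \<inter> A. weight_D a b c cb D h) / (\<Sum>h \<in> Omega_D D. weight_D a b c cb D h)"

text \<open>For cb in [0,\<infinity>]: the weak limits at 0 and \<infinity> (on a finite state space, weak
  convergence is convergence of the probability of every event).\<close>
definition HF_D :: "real \<Rightarrow> real \<Rightarrow> real \<Rightarrow> ereal \<Rightarrow> face set \<Rightarrow> hfun set \<Rightarrow> real" where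
  "HF_D a b c cb D A =
     (if cb = 0 then Lim (at_right 0) (\<lambda>x. prob_D a b c x D A)
      else if cb = \<infinity> then Lim at_top (\<lambda>x. prob_D a b c x D A)
      else prob_D a b c (real_of_ereal cb) D A)"

text \<open>The measure HF^t on the graph D minus the vertices of bdryV D.\<close>
definition Omega_R :: "hfun \<Rightarrow> face set \<Rightarrow> hfun set" where
  "Omega_R t D = {h. height_function h \<and>
     (\<forall>u. (u \<notin> D \<or> (\<exists>v \<in> bdryV D. u \<in> faces_at v)) \<longrightarrow> h u = t u)}"

definition weight_R :: "real \<Rightarrow> real \<Rightarrow> real \<Rightarrow> face set \<Rightarrow> hfun \<Rightarrow> real" where
  "weight_R a b c D h = (\<Prod>v \<in> dom_vertices D - bdryV D. vweight a b c h v)"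

definition HF_R :: "real \<Rightarrow> real \<Rightarrow> real \<Rightarrow> hfun \<Rightarrow> face set \<Rightarrow> hfun set \<Rightarrow> real" where
  "HF_R a b c t D A =
     (\<Sum>h \<in> Omega_R t D \<inter> A. weight_R a b c D h) / (\<Sum>h \<in> Omega_R t D. weight_R a b c D h)"

definition increasing_event :: "hfun set \<Rightarrow> bool" where
  "increasing_event A \<longleftrightarrow> (\<forall>h h'. h \<in> A \<and> (\<forall>u. h u \<le> h' u) \<longrightarrow> h' \<in> A)"

definition stoch_dom :: "(hfun set \<Rightarrow> real) \<Rightarrow> (hfun set \<Rightarrow> real) \<Rightarrow> bool" where
  "stoch_dom P Q \<longleftrightarrow> (\<forall>A. increasing_event A \<longrightarrow> P A \<le> Q A)"

end

theory Submission
  imports Defs "HOL-Library.FuncSet"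
begin

lemma ad_base:
  fixes a0 a1 b0 b1 c0 c1 d0 d1 :: real
  assumes nn: "0 \<le> a0" "0 \<le> a1" "0 \<le> b0" "0 \<le> b1" "0 \<le> c0" "0 \<le> c1" "0 \<le> d0" "0 \<le> d1"
    and h00: "a0 * b0 \<le> c0 * d0" and h01: "a0 * b1 \<le> c0 * d1"
    and h10: "a1 * b0 \<le> c0 * d1" and h11: "a1 * b1 \<le> c1 * d1"
  shows "(a0 + a1) * (b0 + b1) \<le> (c0 + c1) * (d0 + d1)"
proof (cases "c0 * d1 = 0")
  case True
  then have z: "a0 * b1 = 0" "a1 * b0 = 0" using h01 h10 mult_nonneg_nonneg[OF nn(1) nn(4)] mult_nonneg_nonneg[OF nn(2) nn(3)] by linarith+
  moreover have "0 \<le> c1 * d0" using nn by simp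
  moreover have "(a0+a1)*(b0+b1) = a0*b0 + a1*b1 + a0*b1 + a1*b0"
    "(c0+c1)*(d0+d1) = c0*d0+c1*d1+c0*d1+c1*d0" by (simp_all add: algebra_simps)
  ultimately show ?thesis using h00 h11 z True by linarith
next
  case False
  define w where "w = c0 * d1"
  define u where "u = a0 * b1"
  define v where "v = a1 * b0"
  have wpos: "w > 0" using False nn unfolding w_def by (simp add: less_le)
  have u0: "0 \<le> u" "u \<le> w" using nn h01 by (auto simp: u_def w_def)
  have v0: "0 \<le> v" "v \<le> w" using nn h10 by (auto simp: v_def w_def)
  have "u * v = (a0 * b0) * (a1 * b1)" by (simp add: u_def v_def algebra_simps)
  also have "\<dots> \<le> (c0 * d0) * (c1 * d1)" by (rule mult_mono[OF h00 h11]) (use nn in simp_all)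
  also have "\<dots> = w * (c1 * d0)" by (simp add: w_def algebra_simps)
  finally have uv: "u * v \<le> w * (c1 * d0)" .
  have "(w - u) * (w - v) \<ge> 0" using u0 v0 by simp
  then have "w * (u + v) \<le> w * w + u * v" by (simp add: algebra_simps)
  also have "\<dots> \<le> w * (w + c1 * d0)" using uv by (simp add: algebra_simps)
  finally have "u + v \<le> w + c1 * d0" using wpos by simp
  then show ?thesis using h00 h11 unfolding u_def v_def w_def by (simp add: algebra_simps)
qed

lemma sum_Pow_insert:
  assumes "finite I" "i \<notin> I"
  shows "sum f (Pow (insert i I)) = (\<Sum>X\<in>Pow I. f X + f (insert i X))"
proof -
  have inj: "inj_on (insert i) (Pow I)" using assms(2) unfolding inj_on_def by (metis PowD in_mono insert_ident)
  have "sum f (Pow (insert i I)) = sum f (Pow I) + sum f (insert i ` Pow I)"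
    unfolding Pow_insert using assms by (intro sum.union_disjoint) auto
  also have "sum f (insert i ` Pow I) = (\<Sum>X\<in>Pow I. f (insert i X))"
    using sum.reindex[OF inj] by simp
  finally show ?thesis by (simp add: sum.distrib)
qed

lemma four_functions:
  fixes \<alpha> \<beta> \<gamma> \<delta> :: "'a set \<Rightarrow> real"
  assumes "finite I"
    and "\<And>X. X \<subseteq> I \<Longrightarrow> 0 \<le> \<alpha> X" "\<And>X. X \<subseteq> I \<Longrightarrow> 0 \<le> \<beta> X"
    "\<And>X. X \<subseteq> I \<Longrightarrow> 0 \<le> \<gamma> X" "\<And>X. X \<subseteq> I \<Longrightarrow> 0 \<le> \<delta> X"
    and "\<And>X Y. X \<subseteq> I \<Longrightarrow> Y \<subseteq> I \<Longrightarrow> \<alpha> X * \<beta> Y \<le> \<gamma> (X \<inter> Y) * \<delta> (X \<union> Y)"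
  shows "sum \<alpha> (Pow I) * sum \<beta> (Pow I) \<le> sum \<gamma> (Pow I) * sum \<delta> (Pow I)"
  using assms
proof (induction I arbitrary: \<alpha> \<beta> \<gamma> \<delta> rule: finite_induct)
  case empty
  then show ?case by auto
next
  case (insert i I)
  let ?a = "\<lambda>X. \<alpha> X + \<alpha> (insert i X)"
  let ?b = "\<lambda>X. \<beta> X + \<beta> (insert i X)"
  let ?c = "\<lambda>X. \<gamma> X + \<gamma> (insert i X)"
  let ?d = "\<lambda>X. \<delta> X + \<delta> (insert i X)"
  have "sum ?a (Pow I) * sum ?b (Pow I) \<le> sum ?c (Pow I) * sum ?d (Pow I)"
  proof (rule insert.IH)
    fix X assume X: "X \<subseteq> I"
    then have X': "insert i X \<subseteq> insert i I" "X \<subseteq> insert i I" by auto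
    show "0 \<le> ?a X" "0 \<le> ?b X" "0 \<le> ?c X" "0 \<le> ?d X"
      using insert.prems(1-4)[OF X'(1)] insert.prems(1-4)[OF X'(2)] by auto
  next
    fix X Y assume X: "X \<subseteq> I" and Y: "Y \<subseteq> I"
    have iX: "i \<notin> X" "i \<notin> Y" using X Y insert.hyps by auto
    have s: "X \<subseteq> insert i I" "Y \<subseteq> insert i I" "insert i X \<subseteq> insert i I" "insert i Y \<subseteq> insert i I"
      using X Y by auto
    have e1: "X \<inter> insert i Y = X \<inter> Y" "insert i X \<inter> Y = X \<inter> Y" using iX by auto
    have e2: "X \<union> insert i Y = insert i (X \<union> Y)" "insert i X \<union> Y = insert i (X \<union> Y)" by auto
    have e3: "insert i X \<inter> insert i Y = insert i (X \<inter> Y)" "insert i X \<union> insert i Y = insert i (X \<union> Y)" by auto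
    have XY: "X \<inter> Y \<subseteq> insert i I" "insert i (X \<inter> Y) \<subseteq> insert i I"
         "X \<union> Y \<subseteq> insert i I" "insert i (X \<union> Y) \<subseteq> insert i I" using X Y by auto
    show "?a X * ?b Y \<le> ?c (X \<inter> Y) * ?d (X \<union> Y)"
      apply (rule ad_base)
      using insert.prems(1-4) s XY
                 apply auto[8]
      using insert.prems(5)[OF s(1) s(2)] insert.prems(5)[OF s(1) s(4)]
        insert.prems(5)[OF s(3) s(2)] insert.prems(5)[OF s(3) s(4)]
      by (simp_all only: e1 e2 e3)
  qed
  then show ?case using insert.hyps by (simp add: sum_Pow_insert)
qed

lemma fiber_single:
  assumes "inj_on enc Q" "S \<subseteq> Q" "g0 \<in> S"
  shows "{x\<in>S. enc x = enc g0} = {g0}"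
  using assms unfolding inj_on_def by blast

lemma holley:
  fixes Om :: "('a \<Rightarrow> int) set" and w1 w2 :: "('a \<Rightarrow> int) \<Rightarrow> real" and U :: "'a set"
  assumes fO: "finite Om" and fU: "finite U"
    and agree: "\<And>g g' u. g \<in> Om \<Longrightarrow> g' \<in> Om \<Longrightarrow> u \<notin> U \<Longrightarrow> g u = g' u"
    and cl_inf: "\<And>g g'. g \<in> Om \<Longrightarrow> g' \<in> Om \<Longrightarrow> (\<lambda>u. min (g u) (g' u)) \<in> Om"
    and cl_sup: "\<And>g g'. g \<in> Om \<Longrightarrow> g' \<in> Om \<Longrightarrow> (\<lambda>u. max (g u) (g' u)) \<in> Om"
    and nn1: "\<And>g. g \<in> Om \<Longrightarrow> 0 \<le> w1 g" and nn2: "\<And>g. g \<in> Om \<Longrightarrow> 0 \<le> w2 g"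
    and cond: "\<And>g g'. g \<in> Om \<Longrightarrow> g' \<in> Om \<Longrightarrow>
        w1 g * w2 g' \<le> w1 (\<lambda>u. min (g u) (g' u)) * w2 (\<lambda>u. max (g u) (g' u))"
    and incA: "\<And>g g'. g \<in> A \<Longrightarrow> (\<forall>u. g u \<le> g' u) \<Longrightarrow> g' \<in> A"
  shows "(\<Sum>g\<in>Om \<inter> A. w1 g) * (\<Sum>g\<in>Om. w2 g) \<le> (\<Sum>g\<in>Om. w1 g) * (\<Sum>g\<in>Om \<inter> A. w2 g)"
proof -
  define P where "P = Sigma U (\<lambda>u. (\<lambda>g. g u) ` Om)"
  have fP: "finite P" unfolding P_def using fU fO by auto
  define enc where "enc g = {p\<in>P. snd p \<le> g (fst p)}" for g :: "'a \<Rightarrow> int"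
  have inj: "inj_on enc Om"
  proof (rule inj_onI)
    fix g g' assume g: "g \<in> Om" and g': "g' \<in> Om" and e: "enc g = enc g'"
    show "g = g'"
    proof
      fix u show "g u = g' u"
      proof (cases "u \<in> U")
        case True
        have "(u, g u) \<in> enc g" "(u, g' u) \<in> enc g'" unfolding enc_def P_def using True g g' by auto
        then have "(u, g u) \<in> enc g'" "(u, g' u) \<in> enc g" using e by auto
        then have "g u \<le> g' u" "g' u \<le> g u" unfolding enc_def by auto
        then show ?thesis by simp
      next
        case False then show ?thesis using agree g g' by blast
      qed
    qed
  qed
  have enc_sub: "enc g \<subseteq> P" for g unfolding enc_def by auto
  have enc_inf: "enc (\<lambda>u. min (g u) (g' u)) = enc g \<inter> enc g'" for g g' unfolding enc_def by auto
  have enc_sup: "enc (\<lambda>u. max (g u) (g' u)) = enc g \<union> enc g'" for g g' unfolding enc_def by auto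
  define \<alpha> where "\<alpha> X = sum w1 {g\<in>Om \<inter> A. enc g = X}" for X
  define \<beta> where "\<beta> X = sum w2 {g\<in>Om. enc g = X}" for X
  define \<gamma> where "\<gamma> X = sum w1 {g\<in>Om. enc g = X}" for X
  define \<delta> where "\<delta> X = sum w2 {g\<in>Om \<inter> A. enc g = X}" for X
  have sums: "sum \<alpha> (Pow P) = (\<Sum>g\<in>Om \<inter> A. w1 g)" "sum \<beta> (Pow P) = (\<Sum>g\<in>Om. w2 g)"
    "sum \<gamma> (Pow P) = (\<Sum>g\<in>Om. w1 g)" "sum \<delta> (Pow P) = (\<Sum>g\<in>Om \<inter> A. w2 g)"
    unfolding \<alpha>_def \<beta>_def \<gamma>_def \<delta>_def
    by (rule sum.group; use fO fP enc_sub in auto)+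
  have nn: "0 \<le> \<alpha> X" "0 \<le> \<beta> X" "0 \<le> \<gamma> X" "0 \<le> \<delta> X" for X
    unfolding \<alpha>_def \<beta>_def \<gamma>_def \<delta>_def by (auto intro!: sum_nonneg nn1 nn2)
  have ab: "\<alpha> X * \<beta> Y \<le> \<gamma> (X \<inter> Y) * \<delta> (X \<union> Y)" for X Y
  proof (cases "\<exists>g\<in>Om \<inter> A. enc g = X \<and> (\<exists>g'\<in>Om. enc g' = Y)")
    case False
    then have "\<alpha> X = 0 \<or> \<beta> Y = 0" unfolding \<alpha>_def \<beta>_def
      by (smt (verit, del_insts) empty_Collect_eq sum.empty)
    then show ?thesis using nn by (auto intro: mult_nonneg_nonneg)
  next
    case True
    then obtain g g' where g: "g \<in> Om" "g \<in> A" "enc g = X" and g': "g' \<in> Om" "enc g' = Y" by auto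
    let ?m = "\<lambda>u. min (g u) (g' u)" and ?M = "\<lambda>u. max (g u) (g' u)"
    have mO: "?m \<in> Om" and MO: "?M \<in> Om" using cl_inf cl_sup g g' by auto
    have MA: "?M \<in> A" using incA[OF g(2)] by auto
    have "\<alpha> X = w1 g" unfolding \<alpha>_def using fiber_single[OF inj, of "Om \<inter> A" g] g by auto
    moreover have "\<beta> Y = w2 g'" unfolding \<beta>_def using fiber_single[OF inj, of "Om" g'] g' by auto
    moreover have "\<gamma> (X \<inter> Y) = w1 ?m" unfolding \<gamma>_def
      using fiber_single[OF inj, of "Om" ?m] mO g g' enc_inf by auto
    moreover have "\<delta> (X \<union> Y) = w2 ?M" unfolding \<delta>_def
      using fiber_single[OF inj, of "Om \<inter> A" ?M] MO MA g g' enc_sup by auto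
    ultimately show ?thesis using cond[OF g(1) g'(1)] by simp
  qed
  have "sum \<alpha> (Pow P) * sum \<beta> (Pow P) \<le> sum \<gamma> (Pow P) * sum \<delta> (Pow P)"
    by (rule four_functions[OF fP]) (use nn ab in auto)
  then show ?thesis unfolding sums .
qed

definition vw :: "real \<Rightarrow> real \<Rightarrow> real \<Rightarrow> int \<Rightarrow> int \<Rightarrow> int \<Rightarrow> int \<Rightarrow> real" where
  "vw a b c s e n w = (if s = n \<and> w = e then c else if s = n then a else if w = e then b else 1)"

lemma vw_shift: "vw a b c s e n w = vw a b c (s - t) (e - t) (n - t) (w - t)"
  unfolding vw_def by auto

lemma cfg_param:
  fixes s e n w :: int
  assumes "\<bar>s - e\<bar> = 1" "\<bar>e - n\<bar> = 1" "\<bar>n - w\<bar> = 1" "\<bar>w - s\<bar> = 1"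
  shows "(e = s + 1 \<and> n = s + 2 \<and> w = s + 1) \<or> (e = s - 1 \<and> n = s - 2 \<and> w = s - 1) \<or>
         (e = s + 1 \<and> n = s \<and> w = s + 1) \<or> (e = s + 1 \<and> n = s \<and> w = s - 1) \<or>
         (e = s - 1 \<and> n = s \<and> w = s + 1) \<or> (e = s - 1 \<and> n = s \<and> w = s - 1)"
  using assms by (simp add: abs_if split: if_splits; linarith)

lemma local_core:
  fixes e n w s' e' n' w' :: int and a b c :: real
  assumes c1: "(e = 1 \<and> n = 2 \<and> w = 1) \<or> (e = - 1 \<and> n = - 2 \<and> w = - 1) \<or>
         (e = 1 \<and> n = 0 \<and> w = 1) \<or> (e = 1 \<and> n = 0 \<and> w = - 1) \<or>
         (e = - 1 \<and> n = 0 \<and> w = 1) \<or> (e = - 1 \<and> n = 0 \<and> w = - 1)"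
    and c2: "(e' = s' + 1 \<and> n' = s' + 2 \<and> w' = s' + 1) \<or> (e' = s' - 1 \<and> n' = s' - 2 \<and> w' = s' - 1) \<or>
         (e' = s' + 1 \<and> n' = s' \<and> w' = s' + 1) \<or> (e' = s' + 1 \<and> n' = s' \<and> w' = s' - 1) \<or>
         (e' = s' - 1 \<and> n' = s' \<and> w' = s' + 1) \<or> (e' = s' - 1 \<and> n' = s' \<and> w' = s' - 1)"
    and sk: "s' = -2 \<or> s' = 0 \<or> s' = 2"
    and aa: "a * a \<le> c * c" "b * b \<le> c * c"
  shows "vw a b c 0 e n w * vw a b c s' e' n' w' \<le>
         vw a b c (min 0 s') (min e e') (min n n') (min w w') * vw a b c (max 0 s') (max e e') (max n n') (max w w')"
  using sk c1 c2 aa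
  by (elim disjE conjE; simp add: vw_def)

lemma local_fkg:
  fixes s e n w s' e' n' w' :: int and a b c :: real
  assumes h1: "\<bar>s - e\<bar> = 1" "\<bar>e - n\<bar> = 1" "\<bar>n - w\<bar> = 1" "\<bar>w - s\<bar> = 1"
    and h2: "\<bar>s' - e'\<bar> = 1" "\<bar>e' - n'\<bar> = 1" "\<bar>n' - w'\<bar> = 1" "\<bar>w' - s'\<bar> = 1"
    and par: "even (s' - s)"
    and ab: "0 < a" "0 < b" "a \<le> c" "b \<le> c"
  shows "vw a b c s e n w * vw a b c s' e' n' w' \<le>
         vw a b c (min s s') (min e e') (min n n') (min w w') * vw a b c (max s s') (max e e') (max n n') (max w w')"
proof -
  have aa: "a * a \<le> c * c" "b * b \<le> c * c" using ab by (auto intro: mult_mono)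
  note p1 = cfg_param[OF h1]
  note p2 = cfg_param[OF h2]
  have b1: "s - 2 \<le> e \<and> e \<le> s + 2 \<and> s - 2 \<le> n \<and> n \<le> s + 2 \<and> s - 2 \<le> w \<and> w \<le> s + 2"
    using p1 by (elim disjE conjE) simp_all
  have b2: "s' - 2 \<le> e' \<and> e' \<le> s' + 2 \<and> s' - 2 \<le> n' \<and> n' \<le> s' + 2 \<and> s' - 2 \<le> w' \<and> w' \<le> s' + 2"
    using p2 by (elim disjE conjE) simp_all
  consider "s' - s \<ge> 4" | "s' - s \<le> -4" | "s' - s = -2 \<or> s' - s = 0 \<or> s' - s = 2"
  proof -
    have "s' - s \<ge> 4 \<or> s' - s \<le> -4 \<or> (s' - s = -2 \<or> s' - s = 0 \<or> s' - s = 2)"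
      using par by presburger
    then show ?thesis using that by blast
  qed
  then show ?thesis
  proof cases
    case 1
    then have "min s s' = s" "min e e' = e" "min n n' = n" "min w w' = w"
      "max s s' = s'" "max e e' = e'" "max n n' = n'" "max w w' = w'" using b1 b2
      by (simp_all add: min_def max_def)
    then show ?thesis by simp
  next
    case 2
    then have "min s s' = s'" "min e e' = e'" "min n n' = n'" "min w w' = w'"
      "max s s' = s" "max e e' = e" "max n n' = n" "max w w' = w" using b1 b2
      by (simp_all add: min_def max_def)
    then show ?thesis by (simp add: mult.commute)
  next
    case 3
    have q1: "(e - s = 1 \<and> n - s = 2 \<and> w - s = 1) \<or> (e - s = - 1 \<and> n - s = - 2 \<and> w - s = - 1) \<or>
         (e - s = 1 \<and> n - s = 0 \<and> w - s = 1) \<or> (e - s = 1 \<and> n - s = 0 \<and> w - s = - 1) \<or>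
         (e - s = - 1 \<and> n - s = 0 \<and> w - s = 1) \<or> (e - s = - 1 \<and> n - s = 0 \<and> w - s = - 1)"
      using p1 by (elim disjE conjE) simp_all
    have q2: "(e' - s = (s' - s) + 1 \<and> n' - s = (s' - s) + 2 \<and> w' - s = (s' - s) + 1) \<or>
         (e' - s = (s' - s) - 1 \<and> n' - s = (s' - s) - 2 \<and> w' - s = (s' - s) - 1) \<or>
         (e' - s = (s' - s) + 1 \<and> n' - s = (s' - s) \<and> w' - s = (s' - s) + 1) \<or>
         (e' - s = (s' - s) + 1 \<and> n' - s = (s' - s) \<and> w' - s = (s' - s) - 1) \<or>
         (e' - s = (s' - s) - 1 \<and> n' - s = (s' - s) \<and> w' - s = (s' - s) + 1) \<or>
         (e' - s = (s' - s) - 1 \<and> n' - s = (s' - s) \<and> w' - s = (s' - s) - 1)"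
      using p2 by (elim disjE conjE) simp_all
    note core = local_core[OF q1 q2 3 aa]
    have m: "min x y - s = min (x - s) (y - s)" "max x y - s = max (x - s) (y - s)" for x y :: int by auto
    show ?thesis
      apply (subst (1 2 3 4) vw_shift[where t = s])
      using core by (simp add: m)
  qed
qed

lemma adj_face_sym: "adj_face u w \<Longrightarrow> adj_face w u"
  unfolding adj_face_def by linarith

lemma adj_parity: "adj_face u w \<Longrightarrow> even_face u \<longleftrightarrow> \<not> even_face w"
  unfolding adj_face_def even_face_def by (auto simp: abs_if split: if_splits; presburger)

lemma bc_even: "even_face u \<Longrightarrow> bc n u = (if even n then n else n + 1)"
  unfolding bc_def by auto
lemma bc_odd: "\<not> even_face u \<Longrightarrow> bc n u = (if even n then n + 1 else n)"
  unfolding bc_def by auto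

lemma bc_hf: "height_function (bc n)"
  unfolding height_function_def
proof (intro conjI allI impI)
  fix u w assume "adj_face u w"
  then have "even_face u \<longleftrightarrow> \<not> even_face w" by (rule adj_parity)
  then show "\<bar>bc n u - bc n w\<bar> = 1" unfolding bc_def by auto
next
  fix u show "even (bc n u) \<longleftrightarrow> even_face u" unfolding bc_def by auto
qed

lemma hf_par: "height_function h \<Longrightarrow> height_function h' \<Longrightarrow> even (h' u - h u)"
proof -
  assume "height_function h" "height_function h'"
  then have "even (h u) = even (h' u)" unfolding height_function_def by blast
  then show ?thesis by simp
qed

lemma hf_min: assumes "height_function h" "height_function h'"
  shows "height_function (\<lambda>u. min (h u) (h' u))"
  unfolding height_function_def
proof (intro conjI allI impI)
  fix u w assume a: "adj_face u w"
  have "\<bar>h u - h w\<bar> = 1" "\<bar>h' u - h' w\<bar> = 1" using a assms unfolding height_function_def by blast+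
  moreover have "even (h' u - h u)" "even (h' w - h w)" using hf_par[OF assms] by auto
  ultimately show "\<bar>min (h u) (h' u) - min (h w) (h' w)\<bar> = 1"
    by (simp add: abs_if min_def split: if_splits; presburger)
next
  fix u
  have "even (h u) = even_face u" "even (h' u) = even_face u" using assms unfolding height_function_def by blast+
  then show "even (min (h u) (h' u)) \<longleftrightarrow> even_face u" by (simp add: min_def)
qed

lemma hf_max: assumes "height_function h" "height_function h'"
  shows "height_function (\<lambda>u. max (h u) (h' u))"
  unfolding height_function_def
proof (intro conjI allI impI)
  fix u w assume a: "adj_face u w"
  have "\<bar>h u - h w\<bar> = 1" "\<bar>h' u - h' w\<bar> = 1" using a assms unfolding height_function_def by blast+
  moreover have "even (h' u - h u)" "even (h' w - h w)" using hf_par[OF assms] by auto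
  ultimately show "\<bar>max (h u) (h' u) - max (h w) (h' w)\<bar> = 1"
    by (simp add: abs_if max_def split: if_splits; presburger)
next
  fix u
  have "even (h u) = even_face u" "even (h' u) = even_face u" using assms unfolding height_function_def by blast+
  then show "even (max (h u) (h' u)) \<longleftrightarrow> even_face u" by (simp add: max_def)
qed

lemma vweight_vw: "vweight a b c h v = vw a b c (h (SW v)) (h (SE v)) (h (NE v)) (h (NW v))"
  unfolding vweight_def vw_def type_c_def type_a_def type_b_def by auto

lemma adj_corners: "adj_face (SW v) (SE v)" "adj_face (SE v) (NE v)" "adj_face (NE v) (NW v)" "adj_face (NW v) (SW v)"
  unfolding adj_face_def SW_def SE_def NE_def NW_def by auto

lemma vweight_fkg:
  assumes "height_function h" "height_function h'" "0 < a" "0 < b" "a \<le> c" "b \<le> c"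
  shows "vweight a b c h v * vweight a b c h' v \<le>
     vweight a b c (\<lambda>u. min (h u) (h' u)) v * vweight a b c (\<lambda>u. max (h u) (h' u)) v"
  unfolding vweight_vw
  apply (rule local_fkg)
  using assms(1,2) adj_corners[of v] hf_par[OF assms(1,2)] assms(3-6)
  unfolding height_function_def by blast+

lemma vweight_pos: "0 < a \<Longrightarrow> 0 < b \<Longrightarrow> 0 < c \<Longrightarrow> 0 < vweight a b c h v"
  unfolding vweight_def by auto

lemma vweight_cong: "(\<And>f. f \<in> faces_at v \<Longrightarrow> h f = h' f) \<Longrightarrow> vweight a b c h v = vweight a b c h' v"
  unfolding vweight_def type_c_def type_a_def type_b_def faces_at_def SW_def SE_def NE_def NW_def
  by simp

lemma cyc_even:
  assumes sc: "simple_cycle cs"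
  shows "even (card {k. k < length cs \<and> (\<exists>y. {cs!k, cs!((k+1) mod length cs)} = {(i-1,y),(i,y)})})"
proof -
  define n where "n = length cs"
  have n0: "n > 0" using sc unfolding simple_cycle_def n_def by auto
  have adj: "\<And>k. k < n \<Longrightarrow> adj_vertex (cs ! k) (cs ! ((k + 1) mod n))"
    using sc unfolding simple_cycle_def n_def by auto
  define g where "g k = (if fst (cs ! (k mod n)) \<ge> i then 1 else 0 :: int)" for k
  have key: "(\<exists>y. {cs!k, cs!((k+1) mod n)} = {(i-1,y),(i,y)}) \<longleftrightarrow> g (Suc k) \<noteq> g k" if k: "k < n" for k
  proof -
    obtain p1 p2 where p: "cs ! k = (p1, p2)" by fastforce
    obtain q1 q2 where q: "cs ! ((k+1) mod n) = (q1, q2)" by fastforce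
    have a: "\<bar>p1 - q1\<bar> + \<bar>p2 - q2\<bar> = 1" using adj[OF k] p q unfolding adj_vertex_def by simp
    have gk: "g k = (if p1 \<ge> i then 1 else 0)" unfolding g_def using k p by simp
    have gs: "g (Suc k) = (if q1 \<ge> i then 1 else 0)" unfolding g_def using q by simp
    show ?thesis unfolding p q gk gs doubleton_eq_iff using a
      by (auto simp: abs_if split: if_splits)
  qed
  have set_eq: "{k. k < length cs \<and> (\<exists>y. {cs!k, cs!((k+1) mod length cs)} = {(i-1,y),(i,y)})}
      = {k \<in> {..<n}. g (Suc k) \<noteq> g k}" using key unfolding n_def by auto
  have "int (card {k \<in> {..<n}. g (Suc k) \<noteq> g k}) = (\<Sum>k\<in>{k \<in> {..<n}. g (Suc k) \<noteq> g k}. 1)"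
    by simp
  also have "\<dots> = (\<Sum>k<n. if g (Suc k) \<noteq> g k then 1 else 0)"
    by (rule sum.inter_filter) simp
  also have "\<dots> = (\<Sum>k<n. \<bar>g (Suc k) - g k\<bar>)"
    by (rule sum.cong) (auto simp: g_def)
  also have "\<dots> = (\<Sum>k<n. g (Suc k) - g k) + (\<Sum>k<n. \<bar>g (Suc k) - g k\<bar> - (g (Suc k) - g k))"
    by (simp add: sum_subtractf)
  also have "(\<Sum>k<n. g (Suc k) - g k) = 0"
    unfolding sum_lessThan_telescope by (simp add: g_def)
  finally have eq: "int (card {k \<in> {..<n}. g (Suc k) \<noteq> g k}) = (\<Sum>k<n. \<bar>g (Suc k) - g k\<bar> - (g (Suc k) - g k))"
    by simp
  have "even (\<Sum>k<n. \<bar>g (Suc k) - g k\<bar> - (g (Suc k) - g k))"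
    by (rule dvd_sum) (auto simp: g_def)
  then show ?thesis unfolding set_eq using eq by (metis even_of_nat)
qed

lemma domain_finite:
  assumes "is_domain D" shows "finite D"
proof -
  obtain cs where sc: "simple_cycle cs" and D: "D = enclosed_faces cs"
    using assms unfolding is_domain_def by auto
  define n where "n = length cs"
  define V where "V = set cs"
  have fV: "finite V" unfolding V_def by simp
  have n0: "n > 0" using sc unfolding simple_cycle_def n_def by auto
  define Y0 where "Y0 = Min (snd ` V)"
  define Y1 where "Y1 = Max (snd ` V)"
  have sub: "D \<subseteq> (fst ` V) \<times> {Y0+1..Y1}"
  proof
    fix u assume uD: "u \<in> D"
    obtain i j where u: "u = (i, j)" by fastforce
    define C where "C = {k. k < length cs \<and>
     (\<exists>y \<ge> snd u. {cs ! k, cs ! ((k + 1) mod length cs)} = {(fst u - 1, y), (fst u, y)})}"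
    have oddC: "odd (card C)" using uD unfolding D enclosed_faces_def crossings_def C_def by simp
    then have "C \<noteq> {}" by auto
    then obtain k y where k: "k < n" and y: "y \<ge> j" and e: "{cs ! k, cs ! ((k + 1) mod n)} = {(i - 1, y), (i, y)}"
      unfolding C_def u n_def by auto
    have mem: "cs ! k \<in> V" "cs ! ((k + 1) mod n) \<in> V" unfolding V_def using k n0 by (auto simp: n_def)
    have iyV: "(i, y) \<in> V" using mem e by (auto simp: doubleton_eq_iff)
    have "i \<in> fst ` V" using iyV by force
    moreover have "y \<le> Y1"
    proof -
      have "y \<in> snd ` V" using iyV by force
      then show ?thesis unfolding Y1_def using fV by simp
    qed
    moreover have "j > Y0"
    proof (rule ccontr)
      assume "\<not> j > Y0"
      then have jle: "j \<le> Y0" by simp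
      have "C = {k. k < length cs \<and> (\<exists>y. {cs!k, cs!((k+1) mod length cs)} = {(i-1,y),(i,y)})}"
      proof -
        have "y \<ge> j" if "k < length cs" "{cs!k, cs!((k+1) mod length cs)} = {(i-1,y),(i,y)}" for k y
        proof -
          have "cs ! k \<in> V" using that(1) unfolding V_def by simp
          then have "snd (cs ! k) \<ge> Y0" unfolding Y0_def using fV by force
          moreover have "snd (cs ! k) = y" using that(2) by (auto simp: doubleton_eq_iff)
          ultimately show ?thesis using jle by simp
        qed
        then show ?thesis unfolding C_def u by auto
      qed
      then show False using oddC cyc_even[OF sc, of i] by simp
    qed
    ultimately show "u \<in> (fst ` V) \<times> {Y0+1..Y1}" using u y by auto
  qed
  show ?thesis by (rule finite_subset[OF sub]) (use fV in auto)
qed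

lemma Omega_D_finite:
  assumes fD: "finite D" shows "finite (Omega_D D)"
proof -
  define Yt where "Yt = Max (insert 0 (snd ` D))"
  define Yb where "Yb = Min (insert 0 (snd ` D))"
  have yt: "u \<in> D \<Longrightarrow> snd u \<le> Yt" for u unfolding Yt_def using fD by simp
  have yb: "u \<in> D \<Longrightarrow> Yb \<le> snd u" for u unfolding Yb_def using fD by simp
  have bc0: "\<bar>bc 0 u\<bar> \<le> 1" for u unfolding bc_def by auto
  define B where "B = 2 + Yt - Yb"
  have bnd: "\<bar>h u\<bar> \<le> B" if h: "h \<in> Omega_D D" and uD: "u \<in> D" for h u
  proof -
    have hf: "height_function h" and out: "\<And>u. u \<notin> D \<Longrightarrow> h u = bc 0 u"
      using h unfolding Omega_D_def by auto
    have ind: "\<bar>h (i, Yt + 1 - int m)\<bar> \<le> 1 + int m" for m i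
    proof (induction m)
      case 0
      have "(i, Yt + 1) \<notin> D" using yt by force
      then show ?case using out bc0 by simp
    next
      case (Suc m)
      have "adj_face (i, Yt + 1 - int (Suc m)) (i, Yt + 1 - int m)" unfolding adj_face_def by simp
      then have "\<bar>h (i, Yt + 1 - int (Suc m)) - h (i, Yt + 1 - int m)\<bar> = 1"
        using hf unfolding height_function_def by blast
      then show ?case using Suc by simp
    qed
    obtain i j where u: "u = (i, j)" by fastforce
    have "j \<le> Yt" "Yb \<le> j" using yt[OF uD] yb[OF uD] u by auto
    then have "Yt + 1 - int (nat (Yt + 1 - j)) = j" by simp
    then have "\<bar>h u\<bar> \<le> 1 + int (nat (Yt + 1 - j))" using ind[of i "nat (Yt + 1 - j)"] u by simp
    then show ?thesis unfolding B_def using \<open>Yb \<le> j\<close> \<open>j \<le> Yt\<close> by simp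
  qed
  define ext where "ext f = (\<lambda>u. if u \<in> D then f u else bc 0 u)" for f :: "face \<Rightarrow> int"
  have "Omega_D D \<subseteq> ext ` (PiE D (\<lambda>_. {-B..B}))"
  proof
    fix h assume h: "h \<in> Omega_D D"
    have "h = ext (restrict h D)"
    proof
      fix u
      have o: "\<And>u. u \<notin> D \<Longrightarrow> h u = bc 0 u" using h unfolding Omega_D_def by blast
      show "h u = ext (restrict h D) u" unfolding ext_def using o by auto
    qed
    moreover have "restrict h D \<in> PiE D (\<lambda>_. {-B..B})" using bnd[OF h] by (force simp: abs_le_iff)
    ultimately show "h \<in> ext ` (PiE D (\<lambda>_. {-B..B}))" by blast
  qed
  then show ?thesis by (rule finite_subset) (use fD in \<open>auto intro: finite_PiE\<close>)
qed

lemma faces_at_diag: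
  assumes "f \<in> faces_at v"
  shows "\<forall>g\<in>faces_at v. g = f \<or> g = (2 * fst v + 1 - fst f, 2 * snd v + 1 - snd f) \<or> adj_face f g"
  using assms unfolding faces_at_def adj_face_def by auto

lemma G1:
  assumes v: "v \<in> dom_vertices D" "v \<notin> bdryV D" and f: "f \<in> faces_at v"
  shows "f \<in> D \<or> f \<in> ext_bdry D"
proof (rule ccontr)
  assume "\<not> (f \<in> D \<or> f \<in> ext_bdry D)"
  then have fD: "f \<notin> D" and nadj: "\<And>w. w \<in> D \<Longrightarrow> \<not> adj_face f w" unfolding ext_bdry_def by auto
  define d where "d = (2 * fst v + 1 - fst f, 2 * snd v + 1 - snd f)"
  have S: "faces_at v \<inter> D \<subseteq> {d}"
  proof
    fix g assume g: "g \<in> faces_at v \<inter> D"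
    then have "g \<noteq> f" "\<not> adj_face f g" using fD nadj by auto
    then show "g \<in> {d}" using faces_at_diag[OF f] g unfolding d_def by auto
  qed
  have ne: "faces_at v \<inter> D \<noteq> {}" using v(1) unfolding dom_vertices_def by auto
  have "card (faces_at v \<inter> D) = 1"
  proof -
    have "faces_at v \<inter> D = {d}" using S ne by blast
    then show ?thesis by simp
  qed
  then show False using v(2) unfolding bdryV_def by auto
qed

lemma corner_generic:
  assumes ed: "even_domain D" and h: "h \<in> Omega_D D" and uD: "u \<in> D" and out: "q \<notin> D" "r \<notin> D" "d \<notin> D"
    and adj: "adj_face u q" "adj_face u r" "adj_face d q"
  shows "h d = 1 \<and> h q = 0 \<and> h r = 0 \<and> (h u = 1 \<or> h u = -1) \<and> \<not> even_face u"
proof -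
  have hf: "height_function h" and o: "\<And>u. u \<notin> D \<Longrightarrow> h u = bc 0 u"
    using h unfolding Omega_D_def by auto
  have "q \<in> ext_bdry D" "r \<in> ext_bdry D" using out uD adj adj_face_sym unfolding ext_bdry_def by blast+
  then have eq: "even_face q" "even_face r" using ed unfolding even_domain_def by auto
  have ou: "\<not> even_face u" using adj_parity[OF adj(1)] eq by simp
  have od: "\<not> even_face d" using adj_parity[OF adj(3)] eq by simp
  have v: "h q = 0" "h r = 0" "h d = 1" using o out eq od by (auto simp: bc_even bc_odd)
  have "\<bar>h u - h q\<bar> = 1" using hf adj(1) unfolding height_function_def by blast
  then show ?thesis using v ou by auto
qed

lemma faces_at_eq: "faces_at v = {SW v, SE v, NW v, NE v}"
  unfolding faces_at_def SW_def SE_def NW_def NE_def by auto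

lemma bdry_single:
  assumes "v \<in> bdryV D" "u \<in> faces_at v" "u \<in> D"
  shows "faces_at v \<inter> D = {u}"
proof -
  have "card (faces_at v \<inter> D) = 1" using assms(1) unfolding bdryV_def by auto
  then obtain x where "faces_at v \<inter> D = {x}" by (rule card_1_singletonE)
  then show ?thesis using assms(2,3) by auto
qed

lemma bdry_face:
  assumes ed: "even_domain D" and v: "v \<in> bdryV D" and u: "u \<in> faces_at v" "u \<in> D" and h: "h \<in> Omega_D D"
  shows "(type_c h v \<longleftrightarrow> h u = 1) \<and> (h u = 1 \<or> h u = -1) \<and> \<not> even_face u"
proof -
  have S: "faces_at v \<inter> D = {u}" by (rule bdry_single[OF v u])
  have dist: "SW v \<noteq> SE v" "SW v \<noteq> NW v" "SW v \<noteq> NE v" "SE v \<noteq> NW v" "SE v \<noteq> NE v" "NW v \<noteq> NE v"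
    unfolding SW_def SE_def NW_def NE_def by (simp_all add: prod_eq_iff)
  have fa: "SW v \<in> faces_at v" "SE v \<in> faces_at v" "NW v \<in> faces_at v" "NE v \<in> faces_at v"
    unfolding faces_at_eq by auto
  have nd: "\<And>f. f \<in> faces_at v \<Longrightarrow> f \<noteq> u \<Longrightarrow> f \<notin> D" using S by blast
  have adjs: "adj_face (SW v) (SE v)" "adj_face (SW v) (NW v)" "adj_face (NE v) (SE v)" "adj_face (NE v) (NW v)"
    "adj_face (SE v) (SW v)" "adj_face (SE v) (NE v)" "adj_face (NW v) (SW v)" "adj_face (NW v) (NE v)"
    unfolding adj_face_def SW_def SE_def NW_def NE_def by auto
  have "u = SW v \<or> u = SE v \<or> u = NW v \<or> u = NE v" using u(1) unfolding faces_at_eq by auto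
  then show ?thesis
  proof (elim disjE)
    assume e: "u = SW v"
    have "h (NE v) = 1 \<and> h (SE v) = 0 \<and> h (NW v) = 0 \<and> (h u = 1 \<or> h u = -1) \<and> \<not> even_face u"
      by (rule corner_generic[OF ed h u(2)]) (use e nd fa dist adjs in auto)
    then show ?thesis unfolding type_c_def using e by auto
  next
    assume e: "u = SE v"
    have "h (NW v) = 1 \<and> h (SW v) = 0 \<and> h (NE v) = 0 \<and> (h u = 1 \<or> h u = -1) \<and> \<not> even_face u"
      by (rule corner_generic[OF ed h u(2)]) (use e nd fa dist adjs in auto)
    then show ?thesis unfolding type_c_def using e by auto
  next
    assume e: "u = NW v"
    have "h (SE v) = 1 \<and> h (SW v) = 0 \<and> h (NE v) = 0 \<and> (h u = 1 \<or> h u = -1) \<and> \<not> even_face u"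
      by (rule corner_generic[OF ed h u(2)]) (use e nd fa dist adjs in auto)
    then show ?thesis unfolding type_c_def using e by auto
  next
    assume e: "u = NE v"
    have "h (SW v) = 1 \<and> h (SE v) = 0 \<and> h (NW v) = 0 \<and> (h u = 1 \<or> h u = -1) \<and> \<not> even_face u"
      by (rule corner_generic[OF ed h u(2)]) (use e nd fa dist adjs in auto)
    then show ?thesis unfolding type_c_def using e by auto
  qed
qed

lemma bdry_has_face:
  assumes "v \<in> bdryV D" obtains u where "u \<in> faces_at v" "u \<in> D"
proof -
  have "card (faces_at v \<inter> D) = 1" using assms unfolding bdryV_def by auto
  then have "faces_at v \<inter> D \<noteq> {}" by auto
  then show ?thesis using that by blast
qed

lemma dom_vertices_finite:
  assumes "finite D" shows "finite (dom_vertices D)"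
proof -
  have "dom_vertices D \<subseteq> (\<Union>u\<in>D. {u, (fst u - 1, snd u), (fst u, snd u - 1), (fst u - 1, snd u - 1)})"
    unfolding dom_vertices_def faces_at_def by auto
  then show ?thesis by (rule finite_subset) (use assms in auto)
qed

lemma bdryV_sub: "bdryV D \<subseteq> dom_vertices D"
  unfolding bdryV_def dom_vertices_def by (auto simp: card_gt_0_iff[symmetric])

definition Nc :: "face set \<Rightarrow> hfun \<Rightarrow> nat" where
  "Nc D h = card {v \<in> bdryV D. type_c h v}"

lemma bdryV_finite: "finite D \<Longrightarrow> finite (bdryV D)"
  using finite_subset[OF bdryV_sub dom_vertices_finite] by blast

lemma wD_eq:
  assumes "finite D"
  shows "weight_D a b c x D h = weight_R a b c D h * x ^ Nc D h"
proof -
  have f: "finite (bdryV D)" using bdryV_finite[OF assms] .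
  have "(\<Prod>v\<in>bdryV D. if type_c h v then x else 1) = x ^ card (bdryV D \<inter> {v. type_c h v})"
    by (simp add: prod.If_cases[OF f])
  moreover have "bdryV D \<inter> {v. type_c h v} = {v \<in> bdryV D. type_c h v}" by auto
  ultimately show ?thesis unfolding weight_D_def weight_R_def Nc_def by simp
qed

lemma wR_pos: "0 < a \<Longrightarrow> 0 < b \<Longrightarrow> 0 < c \<Longrightarrow> 0 < weight_R a b c D h"
  unfolding weight_R_def by (intro prod_pos vweight_pos)

lemma wD_pos: "0 < a \<Longrightarrow> 0 < b \<Longrightarrow> 0 < c \<Longrightarrow> 0 < x \<Longrightarrow> 0 < weight_D a b c x D h"
  unfolding weight_D_def by (intro mult_pos_pos prod_pos vweight_pos) auto

lemma Omega_D_min: "h \<in> Omega_D D \<Longrightarrow> h' \<in> Omega_D D \<Longrightarrow> (\<lambda>u. min (h u) (h' u)) \<in> Omega_D D"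
  unfolding Omega_D_def using hf_min by auto
lemma Omega_D_max: "h \<in> Omega_D D \<Longrightarrow> h' \<in> Omega_D D \<Longrightarrow> (\<lambda>u. max (h u) (h' u)) \<in> Omega_D D"
  unfolding Omega_D_def using hf_max by auto
lemma bc0_in: "bc 0 \<in> Omega_D D"
  unfolding Omega_D_def using bc_hf by auto

lemma Omega_D_out: "h \<in> Omega_D D \<Longrightarrow> u \<notin> D \<Longrightarrow> h u = bc 0 u"
  unfolding Omega_D_def by blast

lemma hf_of_Omega_D: "h \<in> Omega_D D \<Longrightarrow> height_function h"
  unfolding Omega_D_def by auto

lemma mono_F1:
  assumes ed: "even_domain D" and ab: "0 < a" "0 < b" "max a b \<le> c" and xy: "0 < x" "x \<le> y"
    and A: "increasing_event A"
  shows "prob_D a b c x D A \<le> prob_D a b c y D A"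
proof -
  have fD: "finite D" using ed domain_finite unfolding even_domain_def by blast
  have fO: "finite (Omega_D D)" using Omega_D_finite[OF fD] .
  have c0: "0 < c" using ab by auto
  let ?I = "dom_vertices D - bdryV D" and ?B = "bdryV D"
  let ?X = "\<lambda>z g v. if type_c g v then z else (1::real)"
  have split: "weight_D a b c x D g * weight_D a b c y D g' =
     (\<Prod>v\<in>?I. vweight a b c g v * vweight a b c g' v) * (\<Prod>v\<in>?B. ?X x g v * ?X y g' v)" for g g'
    unfolding weight_D_def prod.distrib by (simp add: mult_ac)
  have cond: "weight_D a b c x D g * weight_D a b c y D g' \<le>
     weight_D a b c x D (\<lambda>u. min (g u) (g' u)) * weight_D a b c y D (\<lambda>u. max (g u) (g' u))"
    if g: "g \<in> Omega_D D" and g': "g' \<in> Omega_D D" for g g'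
  proof -
    let ?m = "\<lambda>u. min (g u) (g' u)" and ?M = "\<lambda>u. max (g u) (g' u)"
    have mO: "?m \<in> Omega_D D" and MO: "?M \<in> Omega_D D" using Omega_D_min Omega_D_max g g' by auto
    have i: "(\<Prod>v\<in>?I. vweight a b c g v * vweight a b c g' v) \<le> (\<Prod>v\<in>?I. vweight a b c ?m v * vweight a b c ?M v)"
    proof (rule prod_mono)
      fix v
      show "0 \<le> vweight a b c g v * vweight a b c g' v \<and>
            vweight a b c g v * vweight a b c g' v \<le> vweight a b c ?m v * vweight a b c ?M v"
        using vweight_fkg[OF hf_of_Omega_D[OF g] hf_of_Omega_D[OF g'] ab(1,2)] ab
          vweight_pos[OF ab(1,2) c0, of g v] vweight_pos[OF ab(1,2) c0, of g' v]
        by (auto intro: less_imp_le)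
    qed
    have bd: "(\<Prod>v\<in>?B. ?X x g v * ?X y g' v) \<le> (\<Prod>v\<in>?B. ?X x ?m v * ?X y ?M v)"
    proof (rule prod_mono)
      fix v assume v: "v \<in> ?B"
      obtain u where u: "u \<in> faces_at v" "u \<in> D" using bdry_has_face[OF v] by blast
      note f1 = bdry_face[OF ed v u g] and f2 = bdry_face[OF ed v u g']
        and f3 = bdry_face[OF ed v u mO] and f4 = bdry_face[OF ed v u MO]
      show "0 \<le> ?X x g v * ?X y g' v \<and> ?X x g v * ?X y g' v \<le> ?X x ?m v * ?X y ?M v"
        using f1 f2 f3 f4 xy by auto
    qed
    have nn1: "0 \<le> (\<Prod>v\<in>?I. vweight a b c g v * vweight a b c g' v)"
      using vweight_pos[OF ab(1,2) c0] by (intro prod_nonneg) (auto intro: less_imp_le)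
    have nn2: "0 \<le> (\<Prod>v\<in>?B. ?X x g v * ?X y g' v)"
      using xy by (intro prod_nonneg) auto
    show ?thesis unfolding split by (rule mult_mono[OF i bd]) (use nn1 i nn2 in linarith)+
  qed
  have H: "(\<Sum>g\<in>Omega_D D \<inter> A. weight_D a b c x D g) * (\<Sum>g\<in>Omega_D D. weight_D a b c y D g)
      \<le> (\<Sum>g\<in>Omega_D D. weight_D a b c x D g) * (\<Sum>g\<in>Omega_D D \<inter> A. weight_D a b c y D g)"
  proof (rule holley[OF fO fD])
    show "g u = g' u" if "g \<in> Omega_D D" "g' \<in> Omega_D D" "u \<notin> D" for g g' u
      using that Omega_D_out by metis
    show "(\<lambda>u. min (g u) (g' u)) \<in> Omega_D D" if "g \<in> Omega_D D" "g' \<in> Omega_D D" for g g'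
      using Omega_D_min that by blast
    show "(\<lambda>u. max (g u) (g' u)) \<in> Omega_D D" if "g \<in> Omega_D D" "g' \<in> Omega_D D" for g g'
      using Omega_D_max that by blast
    show "0 \<le> weight_D a b c x D g" "0 \<le> weight_D a b c y D g" for g
      using wD_pos[OF ab(1,2) c0] xy by (auto intro: less_imp_le)
    show "weight_D a b c x D g * weight_D a b c y D g' \<le>
     weight_D a b c x D (\<lambda>u. min (g u) (g' u)) * weight_D a b c y D (\<lambda>u. max (g u) (g' u))"
      if "g \<in> Omega_D D" "g' \<in> Omega_D D" for g g' using cond that by blast
    show "g' \<in> A" if "g \<in> A" "\<forall>u. g u \<le> g' u" for g g'
      using A that unfolding increasing_event_def by blast
  qed
  have p1: "0 < (\<Sum>g\<in>Omega_D D. weight_D a b c x D g)"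
    using wD_pos[OF ab(1,2) c0] xy bc0_in fO by (intro sum_pos2[where i = "bc 0"]) (auto intro: less_imp_le)
  have p2: "0 < (\<Sum>g\<in>Omega_D D. weight_D a b c y D g)"
    using wD_pos[OF ab(1,2) c0] xy bc0_in fO by (intro sum_pos2[where i = "bc 0"]) (auto intro: less_imp_le)
  show ?thesis unfolding prob_D_def using H p1 p2 by (simp add: divide_simps mult.commute)
qed

definition psi :: "face set \<Rightarrow> hfun \<Rightarrow> hfun" where
  "psi D g = (\<lambda>u. if u \<in> D then g u else bc 0 u)"
definition phi :: "face set \<Rightarrow> hfun \<Rightarrow> hfun" where
  "phi D h = (\<lambda>u. if u \<in> D then h u else bc (-1) u)"

lemma hf_glue:
  assumes g: "height_function g" and t: "height_function t" and e: "\<And>w. w \<in> ext_bdry D \<Longrightarrow> g w = t w"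
  shows "height_function (\<lambda>u. if u \<in> D then g u else t u)"
  unfolding height_function_def
proof (intro conjI allI impI)
  fix u w assume a: "adj_face u w"
  have gg: "\<bar>g u - g w\<bar> = 1" "\<bar>t u - t w\<bar> = 1" using a g t unfolding height_function_def by blast+
  show "\<bar>(if u \<in> D then g u else t u) - (if w \<in> D then g w else t w)\<bar> = 1"
  proof (cases "u \<in> D"; cases "w \<in> D")
    assume "u \<in> D" "w \<notin> D"
    then have "w \<in> ext_bdry D" using a adj_face_sym unfolding ext_bdry_def by blast
    then show ?thesis using gg e \<open>u \<in> D\<close> \<open>w \<notin> D\<close> by simp
  next
    assume "u \<notin> D" "w \<in> D"
    then have "u \<in> ext_bdry D" using a unfolding ext_bdry_def by blast
    then show ?thesis using gg e \<open>u \<notin> D\<close> \<open>w \<in> D\<close> by simp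
  qed (use gg in auto)
next
  fix u
  have "even (g u) = even_face u" "even (t u) = even_face u" using g t unfolding height_function_def by blast+
  then show "even (if u \<in> D then g u else t u) = even_face u" by simp
qed

lemma ext_even: "even_domain D \<Longrightarrow> w \<in> ext_bdry D \<Longrightarrow> even_face w"
  unfolding even_domain_def by auto

lemma ext_notin: "w \<in> ext_bdry D \<Longrightarrow> w \<notin> D"
  unfolding ext_bdry_def by auto

lemma Omega_R_hf: "g \<in> Omega_R t D \<Longrightarrow> height_function g"
  unfolding Omega_R_def by auto
lemma Omega_R_out: "g \<in> Omega_R t D \<Longrightarrow> u \<notin> D \<Longrightarrow> g u = t u"
  unfolding Omega_R_def by blast
lemma Omega_R_bd: "g \<in> Omega_R t D \<Longrightarrow> v \<in> bdryV D \<Longrightarrow> u \<in> faces_at v \<Longrightarrow> g u = t u"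
  unfolding Omega_R_def by blast

lemma Nc0: "finite D \<Longrightarrow> Nc D h = 0 \<longleftrightarrow> (\<forall>v\<in>bdryV D. \<not> type_c h v)"
  unfolding Nc_def using bdryV_finite by auto

lemma psi_in:
  assumes ed: "even_domain D" and g: "g \<in> Omega_R (bc (-1)) D"
  shows "psi D g \<in> Omega_D D" "Nc D (psi D g) = 0"
proof -
  have fD: "finite D" using ed domain_finite unfolding even_domain_def by blast
  have hf: "height_function (psi D g)" unfolding psi_def
  proof (rule hf_glue[OF Omega_R_hf[OF g] bc_hf])
    fix w assume w: "w \<in> ext_bdry D"
    show "g w = bc 0 w" using Omega_R_out[OF g ext_notin[OF w]] ext_even[OF ed w] by (simp add: bc_even)
  qed
  then show P: "psi D g \<in> Omega_D D" unfolding Omega_D_def psi_def by auto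
  show "Nc D (psi D g) = 0" unfolding Nc0[OF fD]
  proof
    fix v assume v: "v \<in> bdryV D"
    obtain u where u: "u \<in> faces_at v" "u \<in> D" using bdry_has_face[OF v] by blast
    note f = bdry_face[OF ed v u P]
    have "psi D g u = -1" unfolding psi_def using u Omega_R_bd[OF g v u(1)] f by (simp add: bc_odd)
    then show "\<not> type_c (psi D g) v" using f by simp
  qed
qed

lemma phi_in:
  assumes ed: "even_domain D" and h: "h \<in> Omega_D D" and N: "Nc D h = 0"
  shows "phi D h \<in> Omega_R (bc (-1)) D"
proof -
  have fD: "finite D" using ed domain_finite unfolding even_domain_def by blast
  have nc: "\<And>v. v \<in> bdryV D \<Longrightarrow> \<not> type_c h v" using N Nc0[OF fD] by auto
  have hf: "height_function (phi D h)" unfolding phi_def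
  proof (rule hf_glue[OF hf_of_Omega_D[OF h] bc_hf])
    fix w assume w: "w \<in> ext_bdry D"
    show "h w = bc (-1) w" using Omega_D_out[OF h ext_notin[OF w]] ext_even[OF ed w] by (simp add: bc_even)
  qed
  have fix1: "phi D h u = bc (-1) u" if "u \<notin> D \<or> (\<exists>v\<in>bdryV D. u \<in> faces_at v)" for u
  proof (cases "u \<in> D")
    case True
    have hyp: "u \<notin> D \<or> (\<exists>v\<in>bdryV D. u \<in> faces_at v)" by fact
    then obtain v where v: "v \<in> bdryV D" "u \<in> faces_at v" using True by blast
    note f = bdry_face[OF ed v(1) v(2) True h]
    then have "h u = -1" using nc[OF v(1)] by auto
    then show ?thesis unfolding phi_def using True f by (simp add: bc_odd)
  next
    case False then show ?thesis unfolding phi_def by simp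
  qed
  show ?thesis unfolding Omega_R_def using hf fix1 by blast
qed

lemma psi_phi: "h \<in> Omega_D D \<Longrightarrow> psi D (phi D h) = h"
  unfolding psi_def phi_def using Omega_D_out by fastforce
lemma phi_psi: "g \<in> Omega_R (bc (-1)) D \<Longrightarrow> phi D (psi D g) = g"
  unfolding psi_def phi_def using Omega_R_out by fastforce

lemma psi_ge: "g \<in> Omega_R (bc (-1)) D \<Longrightarrow> g u \<le> psi D g u"
  unfolding psi_def using Omega_R_out[of g "bc (-1)" D u] by (auto simp: bc_def)

lemma wR_psi:
  assumes ed: "even_domain D" and g: "g \<in> Omega_R (bc (-1)) D"
  shows "weight_R a b c D (psi D g) = weight_R a b c D g"
  unfolding weight_R_def
proof (rule prod.cong[OF refl], rule vweight_cong)
  fix v f assume v: "v \<in> dom_vertices D - bdryV D" and f: "f \<in> faces_at v"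
  have "f \<in> D \<or> f \<in> ext_bdry D" using G1[OF _ _ f] v by auto
  then show "psi D g f = g f"
  proof
    assume "f \<in> D" then show ?thesis unfolding psi_def by simp
  next
    assume w: "f \<in> ext_bdry D"
    show ?thesis unfolding psi_def using ext_notin[OF w] Omega_R_out[OF g ext_notin[OF w]] ext_even[OF ed w]
      by (simp add: bc_even)
  qed
qed

lemma prob_form: assumes "finite D" shows "prob_D a b c x D A =
  (\<Sum>h\<in>Omega_D D \<inter> A. weight_R a b c D h * x ^ Nc D h) / (\<Sum>h\<in>Omega_D D. weight_R a b c D h * x ^ Nc D h)"
  unfolding prob_D_def wD_eq[OF assms] by simp

lemma sum_zero_pow: "finite S \<Longrightarrow> (\<Sum>h\<in>S. f h * (0::real) ^ k h) = (\<Sum>h\<in>{h\<in>S. k h = 0}. f h)"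
  by (auto simp: sum.inter_filter power_0_left intro!: sum.cong)

lemma bcm1_in: "bc (-1) \<in> Omega_R (bc (-1)) D"
  unfolding Omega_R_def using bc_hf by auto

lemma lim0:
  assumes ed: "even_domain D" and ab: "0 < a" "0 < b" "0 < c"
  shows "((\<lambda>x. prob_D a b c x D A) \<longlongrightarrow>
    (\<Sum>h\<in>{h\<in>Omega_D D. Nc D h = 0} \<inter> A. weight_R a b c D h) / (\<Sum>h\<in>{h\<in>Omega_D D. Nc D h = 0}. weight_R a b c D h)) (at_right 0)"
proof -
  have fD: "finite D" using ed domain_finite unfolding even_domain_def by blast
  have fO: "finite (Omega_D D)" using Omega_D_finite[OF fD] .
  have t1: "((\<lambda>x. \<Sum>h\<in>Omega_D D \<inter> A. weight_R a b c D h * x ^ Nc D h) \<longlongrightarrow>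
      (\<Sum>h\<in>Omega_D D \<inter> A. weight_R a b c D h * 0 ^ Nc D h)) (at_right 0)"
    by (intro tendsto_intros)
  have t2: "((\<lambda>x. \<Sum>h\<in>Omega_D D. weight_R a b c D h * x ^ Nc D h) \<longlongrightarrow>
      (\<Sum>h\<in>Omega_D D. weight_R a b c D h * 0 ^ Nc D h)) (at_right 0)"
    by (intro tendsto_intros)
  have e1: "(\<Sum>h\<in>Omega_D D \<inter> A. weight_R a b c D h * 0 ^ Nc D h) = (\<Sum>h\<in>{h\<in>Omega_D D. Nc D h = 0} \<inter> A. weight_R a b c D h)"
  proof -
    have "{h \<in> Omega_D D \<inter> A. Nc D h = 0} = {h\<in>Omega_D D. Nc D h = 0} \<inter> A" by auto
    then show ?thesis using sum_zero_pow[of "Omega_D D \<inter> A"] fO by simp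
  qed
  have e2: "(\<Sum>h\<in>Omega_D D. weight_R a b c D h * 0 ^ Nc D h) = (\<Sum>h\<in>{h\<in>Omega_D D. Nc D h = 0}. weight_R a b c D h)"
    using sum_zero_pow[of "Omega_D D"] fO by simp
  have pos: "0 < (\<Sum>h\<in>{h\<in>Omega_D D. Nc D h = 0}. weight_R a b c D h)"
    using psi_in[OF ed bcm1_in] fO wR_pos[OF ab]
    by (intro sum_pos2[where i = "psi D (bc (-1))"]) (auto intro: less_imp_le)
  show ?thesis unfolding prob_form[OF fD]
    using tendsto_divide[OF t1 t2] pos unfolding e1 e2 by simp
qed

lemma HFR_le_L0:
  assumes ed: "even_domain D" and ab: "0 < a" "0 < b" "0 < c" and A: "increasing_event A"
  shows "HF_R a b c (bc (-1)) D A \<le>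
    (\<Sum>h\<in>{h\<in>Omega_D D. Nc D h = 0} \<inter> A. weight_R a b c D h) / (\<Sum>h\<in>{h\<in>Omega_D D. Nc D h = 0}. weight_R a b c D h)"
proof -
  have fD: "finite D" using ed domain_finite unfolding even_domain_def by blast
  have fO: "finite (Omega_D D)" using Omega_D_finite[OF fD] .
  let ?R = "Omega_R (bc (-1)) D" and ?Z = "{h\<in>Omega_D D. Nc D h = 0}"
  have bij: "bij_betw (psi D) ?R ?Z"
    by (rule bij_betw_byWitness[where f' = "phi D"])
       (use phi_psi psi_phi psi_in[OF ed] phi_in[OF ed] in auto)
  have fZ: "finite ?Z" using fO by simp
  have den: "(\<Sum>g\<in>?R. weight_R a b c D g) = (\<Sum>h\<in>?Z. weight_R a b c D h)"
  proof -
    have "(\<Sum>g\<in>?R. weight_R a b c D g) = (\<Sum>g\<in>?R. weight_R a b c D (psi D g))"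
      using wR_psi[OF ed] by simp
    also have "\<dots> = (\<Sum>h\<in>?Z. weight_R a b c D h)" by (rule sum.reindex_bij_betw[OF bij])
    finally show ?thesis .
  qed
  have inj: "inj_on (psi D) (?R \<inter> A)" using bij unfolding bij_betw_def by (auto intro: inj_on_subset)
  have num: "(\<Sum>g\<in>?R \<inter> A. weight_R a b c D g) \<le> (\<Sum>h\<in>?Z \<inter> A. weight_R a b c D h)"
  proof -
    have "(\<Sum>g\<in>?R \<inter> A. weight_R a b c D g) = (\<Sum>g\<in>?R \<inter> A. weight_R a b c D (psi D g))"
      using wR_psi[OF ed] by simp
    also have "\<dots> = (\<Sum>h\<in>psi D ` (?R \<inter> A). weight_R a b c D h)" by (simp add: sum.reindex[OF inj])
    also have "\<dots> \<le> (\<Sum>h\<in>?Z \<inter> A. weight_R a b c D h)"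
    proof (rule sum_mono2)
      show "finite (?Z \<inter> A)" using fZ by simp
      show "psi D ` (?R \<inter> A) \<subseteq> ?Z \<inter> A"
      proof
        fix h assume "h \<in> psi D ` (?R \<inter> A)"
        then obtain g where g: "g \<in> ?R" "g \<in> A" and h: "h = psi D g" by auto
        have "h \<in> A" using A g psi_ge[OF g(1)] unfolding h increasing_event_def by blast
        then show "h \<in> ?Z \<inter> A" using psi_in[OF ed g(1)] h by auto
      qed
      show "0 \<le> weight_R a b c D h" for h using wR_pos[OF ab] less_imp_le by blast
    qed
    finally show ?thesis .
  qed
  have pos: "0 < (\<Sum>h\<in>?Z. weight_R a b c D h)"
    using psi_in[OF ed bcm1_in] fO wR_pos[OF ab]
    by (intro sum_pos2[where i = "psi D (bc (-1))"]) (auto intro: less_imp_le)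
  show ?thesis unfolding HF_R_def den using num pos by (simp add: divide_right_mono)
qed

lemma Nc_le: "finite D \<Longrightarrow> Nc D h \<le> card (bdryV D)"
  unfolding Nc_def using bdryV_finite by (intro card_mono) auto

lemma Omega_max_eq:
  assumes ed: "even_domain D"
  shows "{h\<in>Omega_D D. Nc D h = card (bdryV D)} = Omega_R (bc 0) D"
proof -
  have fD: "finite D" using ed domain_finite unfolding even_domain_def by blast
  have fB: "finite (bdryV D)" using bdryV_finite[OF fD] .
  have iff: "Nc D h = card (bdryV D) \<longleftrightarrow> (\<forall>v\<in>bdryV D. type_c h v)" for h
  proof
    assume "Nc D h = card (bdryV D)"
    then have "{v \<in> bdryV D. type_c h v} = bdryV D"
      unfolding Nc_def by (intro card_subset_eq[OF fB]) auto
    then show "\<forall>v\<in>bdryV D. type_c h v" by blast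
  next
    assume "\<forall>v\<in>bdryV D. type_c h v"
    then have "{v \<in> bdryV D. type_c h v} = bdryV D" by blast
    then show "Nc D h = card (bdryV D)" unfolding Nc_def by simp
  qed
  show ?thesis
  proof
    show "{h\<in>Omega_D D. Nc D h = card (bdryV D)} \<subseteq> Omega_R (bc 0) D"
    proof
      fix h assume h: "h \<in> {h\<in>Omega_D D. Nc D h = card (bdryV D)}"
      then have hO: "h \<in> Omega_D D" and tc: "\<And>v. v \<in> bdryV D \<Longrightarrow> type_c h v" using iff by auto
      have "h u = bc 0 u" if "u \<notin> D \<or> (\<exists>v\<in>bdryV D. u \<in> faces_at v)" for u
      proof (cases "u \<in> D")
        case True
        have hyp: "u \<notin> D \<or> (\<exists>v\<in>bdryV D. u \<in> faces_at v)" by fact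
        then obtain v where v: "v \<in> bdryV D" "u \<in> faces_at v" using True by blast
        note f = bdry_face[OF ed v(1) v(2) True hO]
        then show ?thesis using tc[OF v(1)] by (simp add: bc_odd)
      next
        case False then show ?thesis using Omega_D_out[OF hO] by simp
      qed
      then show "h \<in> Omega_R (bc 0) D" unfolding Omega_R_def using hf_of_Omega_D[OF hO] by blast
    qed
  next
    show "Omega_R (bc 0) D \<subseteq> {h\<in>Omega_D D. Nc D h = card (bdryV D)}"
    proof
      fix h assume h: "h \<in> Omega_R (bc 0) D"
      have hO: "h \<in> Omega_D D" unfolding Omega_D_def using Omega_R_hf[OF h] Omega_R_out[OF h] by blast
      have "type_c h v" if v: "v \<in> bdryV D" for v
      proof -
        obtain u where u: "u \<in> faces_at v" "u \<in> D" using bdry_has_face[OF v] by blast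
        note f = bdry_face[OF ed v u hO]
        have "h u = bc 0 u" using Omega_R_bd[OF h v u(1)] .
        then show ?thesis using f by (simp add: bc_odd)
      qed
      then show "h \<in> {h\<in>Omega_D D. Nc D h = card (bdryV D)}" using hO iff by blast
    qed
  qed
qed

lemma limInf:
  assumes ed: "even_domain D" and ab: "0 < a" "0 < b" "0 < c"
  shows "((\<lambda>x. prob_D a b c x D A) \<longlongrightarrow> HF_R a b c (bc 0) D A) at_top"
proof -
  have fD: "finite D" using ed domain_finite unfolding even_domain_def by blast
  have fO: "finite (Omega_D D)" using Omega_D_finite[OF fD] .
  define M where "M = card (bdryV D)"
  have le: "Nc D h \<le> M" for h unfolding M_def using Nc_le[OF fD] .
  let ?w = "weight_R a b c D"
  let ?Q = "\<lambda>S x. \<Sum>h\<in>S. ?w h * inverse x ^ (M - Nc D h)"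
  have trm: "?w h * x ^ Nc D h = x ^ M * (?w h * inverse x ^ (M - Nc D h))" if x: "0 < x" for h x
  proof -
    have "x ^ M = x ^ Nc D h * x ^ (M - Nc D h)" using le[of h] by (simp add: power_add[symmetric])
    then show ?thesis using x by (simp add: power_inverse field_simps)
  qed
  have sumeq: "(\<Sum>h\<in>S. ?w h * x ^ Nc D h) = x ^ M * ?Q S x" if "0 < x" for S x
    unfolding sum_distrib_left by (rule sum.cong[OF refl], rule trm[OF that])
  have ev: "eventually (\<lambda>x. ?Q (Omega_D D \<inter> A) x / ?Q (Omega_D D) x = prob_D a b c x D A) at_top"
    using eventually_gt_at_top[of "0::real"]
  proof eventually_elim
    case (elim x)
    then show ?case unfolding prob_form[OF fD] sumeq[OF elim] by simp
  qed
  have inv0: "((\<lambda>x::real. inverse x) \<longlongrightarrow> 0) at_top" by (rule tendsto_inverse_0_at_top[OF filterlim_ident])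
  have t1: "((\<lambda>x. ?Q (Omega_D D \<inter> A) x) \<longlongrightarrow> (\<Sum>h\<in>Omega_D D \<inter> A. ?w h * 0 ^ (M - Nc D h))) at_top"
    by (intro tendsto_intros inv0)
  have t2: "((\<lambda>x. ?Q (Omega_D D) x) \<longlongrightarrow> (\<Sum>h\<in>Omega_D D. ?w h * 0 ^ (M - Nc D h))) at_top"
    by (intro tendsto_intros inv0)
  have mk: "{h\<in>S. M - Nc D h = 0} = {h\<in>S. Nc D h = M}" for S using le by (auto intro: antisym)
  have e1: "(\<Sum>h\<in>Omega_D D \<inter> A. ?w h * 0 ^ (M - Nc D h)) = (\<Sum>h\<in>Omega_R (bc 0) D \<inter> A. ?w h)"
  proof -
    have "(\<Sum>h\<in>Omega_D D \<inter> A. ?w h * 0 ^ (M - Nc D h)) = (\<Sum>h\<in>{h\<in>Omega_D D \<inter> A. M - Nc D h = 0}. ?w h)"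
      by (rule sum_zero_pow) (use fO in simp)
    also have "{h\<in>Omega_D D \<inter> A. M - Nc D h = 0} = Omega_R (bc 0) D \<inter> A"
      unfolding mk using Omega_max_eq[OF ed] unfolding M_def by blast
    finally show ?thesis .
  qed
  have e2: "(\<Sum>h\<in>Omega_D D. ?w h * 0 ^ (M - Nc D h)) = (\<Sum>h\<in>Omega_R (bc 0) D. ?w h)"
  proof -
    have "(\<Sum>h\<in>Omega_D D. ?w h * 0 ^ (M - Nc D h)) = (\<Sum>h\<in>{h\<in>Omega_D D. M - Nc D h = 0}. ?w h)"
      by (rule sum_zero_pow) (use fO in simp)
    also have "{h\<in>Omega_D D. M - Nc D h = 0} = Omega_R (bc 0) D"
      unfolding mk using Omega_max_eq[OF ed] unfolding M_def by blast
    finally show ?thesis .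
  qed
  have bc0R: "bc 0 \<in> Omega_R (bc 0) D" unfolding Omega_R_def using bc_hf by auto
  have "Omega_R (bc 0) D \<subseteq> Omega_D D" using Omega_max_eq[OF ed] by blast
  then have fR: "finite (Omega_R (bc 0) D)" using fO finite_subset by blast
  have pos: "0 < (\<Sum>h\<in>Omega_R (bc 0) D. ?w h)"
    using bc0R fR wR_pos[OF ab] by (intro sum_pos2[where i = "bc 0"]) (auto intro: less_imp_le)
  have "((\<lambda>x. ?Q (Omega_D D \<inter> A) x / ?Q (Omega_D D) x) \<longlongrightarrow> HF_R a b c (bc 0) D A) at_top"
    unfolding HF_R_def by (rule tendsto_divide[OF t1[unfolded e1] t2[unfolded e2]]) (use pos in simp)
  then show ?thesis using ev by (rule Lim_transform_eventually)
qed

lemma main_A: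
  fixes D :: "face set" and a b c :: real and cb cb' :: ereal
  assumes ed: "even_domain D" and ab: "a > 0" "b > 0" "c \<ge> max a b"
    and cb: "0 \<le> cb" "cb \<le> cb'" and A: "increasing_event A"
  shows "HF_R a b c (bc (-1)) D A \<le> HF_D a b c cb D A \<and> HF_D a b c cb D A \<le> HF_D a b c cb' D A
       \<and> HF_D a b c cb' D A \<le> HF_R a b c (bc 0) D A"
proof -
  have c0: "0 < c" using ab by auto
  define P where "P x = prob_D a b c x D A" for x
  define L0 where "L0 = (\<Sum>h\<in>{h\<in>Omega_D D. Nc D h = 0} \<inter> A. weight_R a b c D h) / (\<Sum>h\<in>{h\<in>Omega_D D. Nc D h = 0}. weight_R a b c D h)"
  define Li where "Li = HF_R a b c (bc 0) D A"
  have tP0: "(P \<longlongrightarrow> L0) (at_right 0)" unfolding P_def L0_def by (rule lim0[OF ed ab(1,2) c0])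
  have tPi: "(P \<longlongrightarrow> Li) at_top" unfolding P_def Li_def by (rule limInf[OF ed ab(1,2) c0])
  have mono: "P x \<le> P y" if "0 < x" "x \<le> y" for x y
    unfolding P_def by (rule mono_F1[OF ed ab that A])
  have L0_le: "L0 \<le> P x" if x: "0 < x" for x
  proof (rule tendsto_upperbound[OF tP0])
    show "\<forall>\<^sub>F y in at_right 0. P y \<le> P x"
      unfolding eventually_at_right_field using x mono by (intro exI[of _ x]) auto
  qed simp
  have le_Li: "P x \<le> Li" if x: "0 < x" for x
  proof (rule tendsto_lowerbound[OF tPi])
    show "\<forall>\<^sub>F y in at_top. P x \<le> P y"
      using eventually_ge_at_top[of x] by eventually_elim (use x mono in auto)
  qed simp
  have L0Li: "L0 \<le> Li" using L0_le[of 1] le_Li[of 1] by simp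
  have HF0: "HF_D a b c 0 D A = L0" unfolding HF_D_def P_def[symmetric]
    by (simp add: tendsto_Lim[OF _ tP0])
  have HFi: "HF_D a b c \<infinity> D A = Li" unfolding HF_D_def P_def[symmetric]
    by (simp add: tendsto_Lim[OF _ tPi])
  have HFr: "HF_D a b c (ereal r) D A = P r" if "r > 0" for r
    unfolding HF_D_def P_def using that by simp
  have cls: "z = 0 \<or> z = \<infinity> \<or> (\<exists>r>0. z = ereal r)" if "0 \<le> z" for z :: ereal
    using that by (cases z) auto
  have bnd: "L0 \<le> HF_D a b c z D A \<and> HF_D a b c z D A \<le> Li" if "0 \<le> z" for z
    using cls[OF that] HF0 HFi HFr L0_le le_Li L0Li by auto
  have mon: "HF_D a b c cb D A \<le> HF_D a b c cb' D A"
  proof -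
    consider "cb = 0" | "cb = \<infinity>" | r where "r > 0" "cb = ereal r" using cls[OF cb(1)] by auto
    then show ?thesis
    proof cases
      case 1 then show ?thesis using HF0 bnd[of cb'] cb by auto
    next
      case 2 then have "cb' = \<infinity>" using cb(2) by auto
      then show ?thesis using 2 by simp
    next
      case 3
      have "0 \<le> cb'" using cb by auto
      then consider "cb' = 0" | "cb' = \<infinity>" | r' where "r' > 0" "cb' = ereal r'" using cls by blast
      then show ?thesis
      proof cases
        case 1 then show ?thesis using 3 cb(2) by auto
      next
        case 2 then show ?thesis using 3 HFr HFi le_Li by auto
      next
        case r': 3
        have "r \<le> r'" using 3 r' cb(2) by auto
        then show ?thesis using 3 r' HFr mono by auto
      qed
    qed
  qed
  have "HF_R a b c (bc (-1)) D A \<le> L0" unfolding L0_def by (rule HFR_le_L0[OF ed ab(1,2) c0 A])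
  then show ?thesis using bnd[OF cb(1)] bnd[of cb'] cb mon unfolding Li_def by (auto intro: order_trans)
qed

theorem proposition2p10:
  fixes D :: "face set" and a b c :: real and cb cb' :: ereal
  assumes "even_domain D"
    and "a > 0" and "b > 0" and "c \<ge> max a b"
    and "0 \<le> cb" and "cb \<le> cb'"
  shows "stoch_dom (HF_R a b c (bc (-1)) D) (HF_D a b c cb D)
       \<and> stoch_dom (HF_D a b c cb D) (HF_D a b c cb' D)
       \<and> stoch_dom (HF_D a b c cb' D) (HF_R a b c (bc 0) D)"
  unfolding stoch_dom_def using main_A[OF assms] by blast

end
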